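(* Let $n=n_{obs}+n_{mis}$ with $n_{obs}\ge2$, $n_{mis}\ge1$. Let $Y_1,\dots,Y_{n_{obs}}$ be i.i.d. $N(\mu,\sigma^2)$, with $\bar Y_{obs}$ their mean and $CSS=\sum_{i=1}^{n_{obs}}(Y_i-\bar Y_{obs})^2$. Fix a real constant $c_M$ with $n_{obs}-1+c_M>0$ and let $\hat\sigma^2_{obs,M}=CSS/(n_{obs}-1+c_M)$. For each $d=1,\dots,D$ ($D\ge1$) independently, draw $Y_{imp,i,d}=\bar Y_{obs}+\hat\sigma_{obs,M}Z_{imp,i,d}$ for $i=n_{obs}+1,\dots,n$ with $Z_{imp,i,d}$ i.i.d. $N(0,1)$ independent of the data, and let $\hat\mu_{SI,d}$ be the sample mean of the $n$ values $Y_1,\dots,Y_{n_{obs}},Y_{imp,n_{obs}+1,d},\dots,Y_{imp,n,d}$. Let $\hat\mu_{MI,M}=\frac1D\sum_{d=1}^D\hat\mu_{SI,d}$. Then $$\operatorname{Var}(\hat\mu_{MI,M})=\sigma^2\left(\frac1{n_{obs}}+\frac{n_{mis}(n_{obs}-1)}{Dn^2(c_M+n_{obs}-1)}\right).$$ *)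

theory Defs
  imports "HOL-Probability.Probability"
begin

text \<open>Observed data Y 1, ..., Y n_obs (1-based). Imputation noise Z (i,d) for
 i in {n_obs+1..n}, d in {1..D}, where n = n_obs + n_mis.\<close>

definition ybar_obs :: "nat \<Rightarrow> (nat \<Rightarrow> 'a \<Rightarrow> real) \<Rightarrow> 'a \<Rightarrow> real" where
  "ybar_obs n_obs Y \<omega> = (\<Sum>i=1..n_obs. Y i \<omega>) / real n_obs"

definition CSS :: "nat \<Rightarrow> (nat \<Rightarrow> 'a \<Rightarrow> real) \<Rightarrow> 'a \<Rightarrow> real" where
  "CSS n_obs Y \<omega> = (\<Sum>i=1..n_obs. (Y i \<omega> - ybar_obs n_obs Y \<omega>)^2)"

definition sigma2_hat_obs_M :: "nat \<Rightarrow> real \<Rightarrow> (nat \<Rightarrow> 'a \<Rightarrow> real) \<Rightarrow> 'a \<Rightarrow> real" where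
  "sigma2_hat_obs_M n_obs c_M Y \<omega> = CSS n_obs Y \<omega> / (real n_obs - 1 + c_M)"

definition Y_imp :: "nat \<Rightarrow> real \<Rightarrow> (nat \<Rightarrow> 'a \<Rightarrow> real) \<Rightarrow> (nat \<times> nat \<Rightarrow> 'a \<Rightarrow> real)
    \<Rightarrow> nat \<Rightarrow> nat \<Rightarrow> 'a \<Rightarrow> real" where
  "Y_imp n_obs c_M Y Z i d \<omega> =
     ybar_obs n_obs Y \<omega> + sqrt (sigma2_hat_obs_M n_obs c_M Y \<omega>) * Z (i, d) \<omega>"

definition mu_SI :: "nat \<Rightarrow> nat \<Rightarrow> real \<Rightarrow> (nat \<Rightarrow> 'a \<Rightarrow> real) \<Rightarrow> (nat \<times> nat \<Rightarrow> 'a \<Rightarrow> real)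
    \<Rightarrow> nat \<Rightarrow> 'a \<Rightarrow> real" where
  "mu_SI n_obs n_mis c_M Y Z d \<omega> =
     ((\<Sum>i=1..n_obs. Y i \<omega>) + (\<Sum>i=n_obs+1..n_obs+n_mis. Y_imp n_obs c_M Y Z i d \<omega>))
     / real (n_obs + n_mis)"

definition mu_MI_M :: "nat \<Rightarrow> nat \<Rightarrow> nat \<Rightarrow> real \<Rightarrow> (nat \<Rightarrow> 'a \<Rightarrow> real) \<Rightarrow> (nat \<times> nat \<Rightarrow> 'a \<Rightarrow> real)
    \<Rightarrow> 'a \<Rightarrow> real" where
  "mu_MI_M n_obs n_mis D c_M Y Z \<omega> = (\<Sum>d=1..D. mu_SI n_obs n_mis c_M Y Z d \<omega>) / real D"

end

theory Submission imports Defs begin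
context prob_space begin

lemma L2_mult:
  fixes X Y :: "'a \<Rightarrow> real"
  assumes [measurable]: "X \<in> borel_measurable M" "Y \<in> borel_measurable M"
    and "integrable M (\<lambda>x. X x ^ 2)" "integrable M (\<lambda>x. Y x ^ 2)"
  shows "integrable M (\<lambda>x. X x * Y x)"
proof (rule Bochner_Integration.integrable_bound)
  show "integrable M (\<lambda>x. X x ^ 2 + Y x ^ 2)" using assms by auto
  show "(\<lambda>x. X x * Y x) \<in> borel_measurable M" by measurable
  show "AE x in M. norm (X x * Y x) \<le> norm (X x ^ 2 + Y x ^ 2)"
  proof (intro AE_I2)
    fix x
    have "0 \<le> (\<bar>X x\<bar> - \<bar>Y x\<bar>)^2" by simp
    then have "2 * \<bar>X x\<bar> * \<bar>Y x\<bar> \<le> X x ^ 2 + Y x ^ 2"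
      by (simp add: power2_eq_square algebra_simps)
    moreover have "0 \<le> \<bar>X x\<bar> * \<bar>Y x\<bar>" by simp
    moreover have "norm (X x * Y x) = \<bar>X x\<bar> * \<bar>Y x\<bar>" by (simp add: abs_mult)
    moreover have "norm (X x ^ 2 + Y x ^ 2) = X x ^ 2 + Y x ^ 2" by simp
    ultimately show "norm (X x * Y x) \<le> norm (X x ^ 2 + Y x ^ 2)"
      by linarith
  qed
qed

lemma L2_integrable:
  fixes X :: "'a \<Rightarrow> real"
  assumes [measurable]: "X \<in> borel_measurable M" and "integrable M (\<lambda>x. X x ^ 2)"
  shows "integrable M X"
  using L2_mult[of X "\<lambda>_. 1"] assms by simp

lemma L2_sum:
  fixes X :: "'i \<Rightarrow> 'a \<Rightarrow> real"
  assumes "finite I" and [measurable]: "\<And>i. i \<in> I \<Longrightarrow> X i \<in> borel_measurable M"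
    and "\<And>i. i \<in> I \<Longrightarrow> integrable M (\<lambda>x. X i x ^ 2)"
  shows "integrable M (\<lambda>x. (\<Sum>i\<in>I. X i x) ^ 2)"
proof -
  have "(\<lambda>x. (\<Sum>i\<in>I. X i x) ^ 2) = (\<lambda>x. \<Sum>i\<in>I. \<Sum>j\<in>I. X i x * X j x)"
    by (simp add: power2_eq_square sum_product)
  moreover have "integrable M (\<lambda>x. \<Sum>i\<in>I. \<Sum>j\<in>I. X i x * X j x)"
    using assms by (auto intro!: Bochner_Integration.integrable_sum L2_mult)
  ultimately show ?thesis by simp
qed

lemma L2_diff:
  fixes X Y :: "'a \<Rightarrow> real"
  assumes [measurable]: "X \<in> borel_measurable M" "Y \<in> borel_measurable M"
    and "integrable M (\<lambda>x. X x ^ 2)" "integrable M (\<lambda>x. Y x ^ 2)"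
  shows "integrable M (\<lambda>x. (X x - Y x) ^ 2)"
proof -
  have "(\<lambda>x. (X x - Y x) ^ 2) = (\<lambda>x. X x ^ 2 + Y x ^ 2 - 2 * (X x * Y x))"
    by (simp add: power2_eq_square algebra_simps)
  moreover have "integrable M (\<lambda>x. X x ^ 2 + Y x ^ 2 - 2 * (X x * Y x))"
    using assms L2_mult[of X Y] by auto
  ultimately show ?thesis by simp
qed

lemma sum_sq_expect:
  fixes X :: "'i \<Rightarrow> 'a \<Rightarrow> real"
  assumes "finite I" and [measurable]: "\<And>i. i \<in> I \<Longrightarrow> X i \<in> borel_measurable M"
    and sq: "\<And>i. i \<in> I \<Longrightarrow> integrable M (\<lambda>x. X i x ^ 2)"
    and e0: "\<And>i. i \<in> I \<Longrightarrow> expectation (X i) = 0"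
    and e2: "\<And>i. i \<in> I \<Longrightarrow> expectation (\<lambda>x. X i x ^ 2) = s"
    and ind: "\<And>i j. i \<in> I \<Longrightarrow> j \<in> I \<Longrightarrow> i \<noteq> j \<Longrightarrow> indep_var borel (X i) borel (X j)"
  shows "expectation (\<lambda>x. (\<Sum>i\<in>I. X i x) ^ 2) = real (card I) * s"
proof -
  have "(\<lambda>x. (\<Sum>i\<in>I. X i x) ^ 2) = (\<lambda>x. \<Sum>i\<in>I. \<Sum>j\<in>I. X i x * X j x)"
    by (simp add: power2_eq_square sum_product)
  then have "expectation (\<lambda>x. (\<Sum>i\<in>I. X i x) ^ 2) = (\<Sum>i\<in>I. \<Sum>j\<in>I. expectation (\<lambda>x. X i x * X j x))"
    using assms by (simp add: integral_sum L2_mult)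
  also have "\<dots> = (\<Sum>i\<in>I. \<Sum>j\<in>I. if i = j then s else 0)"
  proof (intro sum.cong refl)
    fix i j assume ij: "i \<in> I" "j \<in> I"
    show "expectation (\<lambda>x. X i x * X j x) = (if i = j then s else 0)"
    proof (cases "i = j")
      case True then show ?thesis using e2 ij by (simp add: power2_eq_square)
    next
      case False
      have "expectation (\<lambda>x. X i x * X j x) = expectation (X i) * expectation (X j)"
        using ind[OF ij False] L2_integrable[OF _ sq] ij
        by (intro indep_var_lebesgue_integral) auto
      then show ?thesis using e0 ij False by simp
    qed
  qed
  also have "\<dots> = real (card I) * s" using \<open>finite I\<close> by simp
  finally show ?thesis .
qed

lemma indep_vars_pair:
  assumes "indep_vars (\<lambda>_. borel) X I" "i \<in> I" "j \<in> I" "i \<noteq> j"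
  shows "indep_var borel (X i) borel (X j)"
proof -
  have "indep_var (PiM {i} (\<lambda>_. borel)) (\<lambda>\<omega>. restrict (\<lambda>k. X k \<omega>) {i})
      (PiM {j} (\<lambda>_. borel)) (\<lambda>\<omega>. restrict (\<lambda>k. X k \<omega>) {j})"
    using assms by (intro indep_var_restrict) auto
  from indep_var_compose[OF this measurable_component_singleton measurable_component_singleton]
  show ?thesis by (simp add: comp_def)
qed

end
lemma css_identity:
  fixes a :: "nat \<Rightarrow> real"
  assumes "finite A" "card A > 0"
  shows "(\<Sum>i\<in>A. (a i - (\<Sum>j\<in>A. a j) / card A)^2) = (\<Sum>i\<in>A. a i ^ 2) - (\<Sum>j\<in>A. a j)^2 / card A"
proof -
  define S where "S = (\<Sum>j\<in>A. a j)"
  define N where "N = real (card A)"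
  have N: "N > 0" using assms N_def by simp
  have "(\<Sum>i\<in>A. (a i - S / N)^2) = (\<Sum>i\<in>A. a i ^ 2 - 2 * (S/N) * a i + (S/N)^2)"
    by (rule sum.cong) (simp_all add: power2_diff field_simps)
  also have "\<dots> = (\<Sum>i\<in>A. a i ^ 2) - 2 * (S/N) * S + N * (S/N)^2"
    by (simp add: sum.distrib sum_subtractf sum_distrib_left S_def N_def)
  also have "\<dots> = (\<Sum>i\<in>A. a i ^ 2) - S^2 / N"
    using N by (simp add: field_simps power2_eq_square)
  finally show ?thesis by (simp add: S_def N_def)
qed

context prob_space begin

lemma normal_facts:
  assumes "\<sigma> > 0" and D: "distributed M lborel X (normal_density \<mu> \<sigma>)"
  shows "X \<in> borel_measurable M" "integrable M (\<lambda>x. (X x - \<mu>)^2)"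
    "expectation (\<lambda>x. X x - \<mu>) = 0" "expectation (\<lambda>x. (X x - \<mu>)^2) = \<sigma>^2"
proof -
  show m: "X \<in> borel_measurable M"
    using distributed_measurable[OF D] by simp
  show "integrable M (\<lambda>x. (X x - \<mu>)^2)"
    using distributed_integrable[OF D, of "\<lambda>x. (x - \<mu>)^2"] integrable_normal_moment[OF assms(1), of \<mu> 2]
    by simp
  have iX: "integrable M X"
    using distributed_integrable_var[OF D] integrable_normal_moment_nz_1[OF assms(1)] by simp
  have eX: "expectation X = \<mu>" using normal_distributed_expectation[OF assms] .
  show "expectation (\<lambda>x. X x - \<mu>) = 0" using iX eX by (simp add: prob_space)
  show "expectation (\<lambda>x. (X x - \<mu>)^2) = \<sigma>^2"
    using normal_distributed_variance[OF assms] eX by simp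
qed

end
theorem mainTheorem4:
  fixes M :: "'a measure"
    and Y :: "nat \<Rightarrow> 'a \<Rightarrow> real" and Z :: "nat \<times> nat \<Rightarrow> 'a \<Rightarrow> real"
    and n_obs n_mis D :: nat and \<mu> \<sigma> c_M :: real
  assumes "prob_space M"
    and "n_obs \<ge> 2" and "n_mis \<ge> 1" and "D \<ge> 1"
    and "\<sigma> > 0"
    and "real n_obs - 1 + c_M > 0"
    and "prob_space.indep_vars M (\<lambda>_. borel)
           (\<lambda>k. case k of Inl i \<Rightarrow> Y i | Inr p \<Rightarrow> Z p)
           (Inl ` {1..n_obs} \<union> Inr ` ({n_obs+1..n_obs+n_mis} \<times> {1..D}))"
    and "\<And>i. i \<in> {1..n_obs} \<Longrightarrow> distributed M lborel (Y i) (normal_density \<mu> \<sigma>)"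
    and "\<And>i d. i \<in> {n_obs+1..n_obs+n_mis} \<Longrightarrow> d \<in> {1..D} \<Longrightarrow>
           distributed M lborel (Z (i, d)) (normal_density 0 1)"
  shows "prob_space.variance M (mu_MI_M n_obs n_mis D c_M Y Z) =
    \<sigma>^2 * (1 / real n_obs + real n_mis * (real n_obs - 1) /
       (real D * (real (n_obs + n_mis))^2 * (c_M + real n_obs - 1)))"
proof -
  interpret prob_space M by fact
  note ind = assms(7)
  define X where "X = (\<lambda>k. case k of Inl i \<Rightarrow> Y i | Inr p \<Rightarrow> Z p)"
  define I where "I = {1..n_obs}"
  define J where "J = {n_obs+1..n_obs+n_mis} \<times> {1..D}"
  define A :: "(nat + nat \<times> nat) set" where "A = Inl ` I"
  define B :: "(nat + nat \<times> nat) set" where "B = Inr ` J"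
  define n where "n = real (n_obs + n_mis)"
  define k where "k = real n_obs - 1 + c_M"
  have k: "k > 0" using assms(6) k_def by simp
  have npos: "n > 0" using n_def assms(2) by simp
  have Dpos: "real D > 0" using assms(4) by simp
  have indX: "indep_vars (\<lambda>_. borel) X (A \<union> B)"
    using ind unfolding X_def A_def B_def I_def J_def .
  define U where "U i \<omega> = Y i \<omega> - \<mu>" for i \<omega>
  have Ym[measurable]: "Y i \<in> borel_measurable M" if "i \<in> I" for i
    using normal_facts(1)[OF assms(5) assms(8)] that I_def by auto
  have Um[measurable]: "U i \<in> borel_measurable M" if "i \<in> I" for i
    using that unfolding U_def by measurable
  have U2: "integrable M (\<lambda>x. U i x ^ 2)" if "i \<in> I" for i
    using normal_facts(2)[OF assms(5) assms(8)] that I_def U_def by auto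
  have U0: "expectation (U i) = 0" if "i \<in> I" for i
    using normal_facts(3)[OF assms(5) assms(8)] that I_def by (auto simp: U_def[abs_def])
  have Us: "expectation (\<lambda>x. U i x ^ 2) = \<sigma>^2" if "i \<in> I" for i
    using normal_facts(4)[OF assms(5) assms(8)] that I_def U_def by auto
  have Uind: "indep_var borel (U i) borel (U j)" if "i \<in> I" "j \<in> I" "i \<noteq> j" for i j
  proof -
    have "indep_var borel (X (Inl i)) borel (X (Inl j))"
      using that by (intro indep_vars_pair[OF indX]) (auto simp: A_def)
    then have "indep_var borel (Y i) borel (Y j)" by (simp add: X_def)
    from indep_var_compose[OF this, of "\<lambda>x. x - \<mu>" borel "\<lambda>x. x - \<mu>" borel]
    show ?thesis by (simp add: comp_def U_def[abs_def])
  qed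
  have Zm[measurable]: "Z p \<in> borel_measurable M" if "p \<in> J" for p
    using normal_facts(1)[OF zero_less_one assms(9)] that J_def by (cases p) auto
  have Z2: "integrable M (\<lambda>x. Z p x ^ 2)" if "p \<in> J" for p
    using normal_facts(2)[OF zero_less_one assms(9)] that J_def by (cases p) auto
  have Z0: "expectation (Z p) = 0" if "p \<in> J" for p
    using normal_facts(3)[OF zero_less_one assms(9)] that J_def by (cases p) auto
  have Zs: "expectation (\<lambda>x. Z p x ^ 2) = 1" if "p \<in> J" for p
    using normal_facts(4)[OF zero_less_one assms(9)] that J_def by (cases p) auto
  have Zind: "indep_var borel (Z p) borel (Z q)" if "p \<in> J" "q \<in> J" "p \<noteq> q" for p q
  proof -
    have "indep_var borel (X (Inr p)) borel (X (Inr q))"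
      using that by (intro indep_vars_pair[OF indX]) (auto simp: B_def)
    then show ?thesis by (simp add: X_def)
  qed
  define SU where "SU \<omega> = (\<Sum>i\<in>I. U i \<omega>)" for \<omega>
  define yb where "yb \<omega> = ybar_obs n_obs Y \<omega>" for \<omega>
  define css where "css \<omega> = CSS n_obs Y \<omega>" for \<omega>
  define s where "s \<omega> = sqrt (sigma2_hat_obs_M n_obs c_M Y \<omega>)" for \<omega>
  define T where "T \<omega> = (\<Sum>p\<in>J. Z p \<omega>)" for \<omega>
  have cardI: "card I = n_obs" by (simp add: I_def)
  have cardJ: "card J = n_mis * D" by (simp add: J_def)
  have nobs: "real n_obs > 0" using assms(2) by simp
  have yb_eq: "yb \<omega> - \<mu> = SU \<omega> / real n_obs" for \<omega>
  proof -
    have "SU \<omega> = (\<Sum>i\<in>I. Y i \<omega>) - real n_obs * \<mu>"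
      by (simp add: SU_def U_def sum_subtractf cardI)
    then show ?thesis using nobs
      by (simp add: yb_def ybar_obs_def I_def field_simps)
  qed
  have css_eq: "css \<omega> = (\<Sum>i\<in>I. U i \<omega> ^ 2) - SU \<omega> ^ 2 / real n_obs" for \<omega>
  proof -
    have "css \<omega> = (\<Sum>i\<in>I. (U i \<omega> - SU \<omega> / real (card I))^2)"
      unfolding css_def CSS_def I_def[symmetric] SU_def
    proof (rule sum.cong[OF refl])
      fix i assume "i \<in> I"
      have "Y i \<omega> - ybar_obs n_obs Y \<omega> = U i \<omega> - (yb \<omega> - \<mu>)"
        by (simp add: U_def yb_def)
      then show "(Y i \<omega> - ybar_obs n_obs Y \<omega>)\<^sup>2 = (U i \<omega> - (\<Sum>i\<in>I. U i \<omega>) / real (card I))\<^sup>2"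
        using yb_eq[of \<omega>] by (simp add: cardI SU_def)
    qed
    also have "\<dots> = (\<Sum>i\<in>I. U i \<omega> ^ 2) - SU \<omega> ^ 2 / real (card I)"
      unfolding SU_def by (rule css_identity) (use assms(2) in \<open>auto simp: I_def\<close>)
    finally show ?thesis by (simp add: cardI)
  qed
  have css_nn: "css \<omega> \<ge> 0" for \<omega> by (simp add: css_def CSS_def sum_nonneg)
  have s2: "s \<omega> ^ 2 = css \<omega> / k" for \<omega>
    using css_nn[of \<omega>] k by (simp add: s_def sigma2_hat_obs_M_def css_def k_def)
  have mu_eq: "mu_MI_M n_obs n_mis D c_M Y Z \<omega> = yb \<omega> + s \<omega> * T \<omega> / (n * real D)" for \<omega>
  proof -
    define Sd where "Sd d = (\<Sum>i=n_obs+1..n_obs+n_mis. Z (i, d) \<omega>)" for d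
    have sumY: "(\<Sum>i=1..n_obs. Y i \<omega>) = real n_obs * yb \<omega>"
      using nobs by (simp add: yb_def ybar_obs_def)
    have SI: "mu_SI n_obs n_mis c_M Y Z d \<omega> = yb \<omega> + s \<omega> * Sd d / n" for d
    proof -
      have "(\<Sum>i=n_obs+1..n_obs+n_mis. Y_imp n_obs c_M Y Z i d \<omega>) = real n_mis * yb \<omega> + s \<omega> * Sd d"
        by (simp add: Y_imp_def sum.distrib Sd_def sum_distrib_left yb_def s_def)
      then show ?thesis using npos unfolding mu_SI_def sumY
        by (simp add: n_def field_simps)
    qed
    have TS: "(\<Sum>d=1..D. Sd d) = T \<omega>"
      unfolding Sd_def T_def J_def
      by (subst sum.swap) (simp add: sum.cartesian_product)
    have "mu_MI_M n_obs n_mis D c_M Y Z \<omega> = (\<Sum>d=1..D. yb \<omega> + s \<omega> * Sd d / n) / real D"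
      by (simp add: mu_MI_M_def SI)
    also have "\<dots> = (real D * yb \<omega> + s \<omega> * T \<omega> / n) / real D"
      by (simp add: sum.distrib TS[symmetric] sum_divide_distrib[symmetric] sum_distrib_left)
    also have "\<dots> = yb \<omega> + s \<omega> * T \<omega> / (n * real D)"
      using Dpos npos by (simp add: field_simps)
    finally show ?thesis .
  qed
  define SU2 where "SU2 \<omega> = (\<Sum>i\<in>I. U i \<omega> ^ 2)" for \<omega>
  have finI: "finite I" and finJ: "finite J" by (auto simp: I_def J_def)
  have SUm[measurable]: "SU \<in> borel_measurable M"
    unfolding SU_def[abs_def] by (rule borel_measurable_sum) (rule Um)
  have SU2m[measurable]: "SU2 \<in> borel_measurable M"
    unfolding SU2_def[abs_def] by (rule borel_measurable_sum) (intro borel_measurable_power Um)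
  have Tm[measurable]: "T \<in> borel_measurable M"
    unfolding T_def[abs_def] by (rule borel_measurable_sum) (rule Zm)
  have css_fun: "css = (\<lambda>\<omega>. SU2 \<omega> - SU \<omega> ^ 2 / real n_obs)"
    using css_eq by (simp add: SU2_def fun_eq_iff)
  have cssm[measurable]: "css \<in> borel_measurable M" unfolding css_fun by measurable
  have s_fun: "s = (\<lambda>\<omega>. sqrt (css \<omega> / k))"
    by (simp add: fun_eq_iff s_def sigma2_hat_obs_M_def css_def k_def)
  have sm[measurable]: "s \<in> borel_measurable M" unfolding s_fun by measurable
  have a_fun: "(\<lambda>\<omega>. yb \<omega> - \<mu>) = (\<lambda>\<omega>. SU \<omega> / real n_obs)" using yb_eq by simp
  have ybm[measurable]: "yb \<in> borel_measurable M"
  proof -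
    have "yb = (\<lambda>\<omega>. SU \<omega> / real n_obs + \<mu>)" using yb_eq by (simp add: fun_eq_iff algebra_simps)
    then show ?thesis by simp
  qed
  have SU_sq: "integrable M (\<lambda>\<omega>. SU \<omega> ^ 2)"
    unfolding SU_def using finI by (intro L2_sum Um U2) auto
  have SU_sqE: "expectation (\<lambda>\<omega>. SU \<omega> ^ 2) = real n_obs * \<sigma>^2"
    unfolding SU_def using sum_sq_expect[OF finI Um U2 U0 Us Uind] cardI by simp
  have SU_int: "integrable M SU" using L2_integrable[OF SUm SU_sq] .
  have SU_E: "expectation SU = 0"
    unfolding SU_def[abs_def] using U0 U2 by (simp add: Bochner_Integration.integral_sum L2_integrable)
  have SU2_int: "integrable M SU2"
    unfolding SU2_def[abs_def] using U2 by (intro Bochner_Integration.integrable_sum) auto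
  have SU2_E: "expectation SU2 = real n_obs * \<sigma>^2"
    unfolding SU2_def[abs_def] using U2 Us cardI by (simp add: Bochner_Integration.integral_sum)
  have css_int: "integrable M css" unfolding css_fun using SU2_int SU_sq by auto
  have css_E: "expectation css = (real n_obs - 1) * \<sigma>^2"
    unfolding css_fun using SU2_int SU_sq SU2_E SU_sqE nobs by (simp add: field_simps)
  have s2_fun: "(\<lambda>\<omega>. s \<omega> ^ 2) = (\<lambda>\<omega>. css \<omega> / k)" using s2 by simp
  have s_sq: "integrable M (\<lambda>\<omega>. s \<omega> ^ 2)" unfolding s2_fun using css_int by auto
  have s_int: "integrable M s" using L2_integrable[OF sm s_sq] .
  have s2_E: "expectation (\<lambda>\<omega>. s \<omega> ^ 2) = (real n_obs - 1) * \<sigma>^2 / k"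
    unfolding s2_fun using css_E by simp
  have a_sq: "integrable M (\<lambda>\<omega>. (yb \<omega> - \<mu>) ^ 2)"
    using SU_sq by (simp add: yb_eq power_divide)
  have a_sqE: "expectation (\<lambda>\<omega>. (yb \<omega> - \<mu>) ^ 2) = \<sigma>^2 / real n_obs"
    using SU_sqE nobs by (simp add: yb_eq power_divide power2_eq_square)
  have b_int: "integrable M (\<lambda>\<omega>. (yb \<omega> - \<mu>) * s \<omega>)"
    using a_sq s_sq by (intro L2_mult) auto
  have T_sq: "integrable M (\<lambda>\<omega>. T \<omega> ^ 2)"
    unfolding T_def using finJ by (intro L2_sum Zm Z2) auto
  have T_sqE: "expectation (\<lambda>\<omega>. T \<omega> ^ 2) = real (n_mis * D)"
    unfolding T_def using sum_sq_expect[OF finJ Zm Z2 Z0 Zs Zind] cardJ by simp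
  have T_int: "integrable M T" using L2_integrable[OF Tm T_sq] .
  have T_E: "expectation T = 0"
    unfolding T_def[abs_def] using Z0 Z2 by (simp add: Bochner_Integration.integral_sum L2_integrable)
  have indAB: "indep_var (PiM A (\<lambda>_. borel)) (\<lambda>\<omega>. restrict (\<lambda>i. X i \<omega>) A)
      (PiM B (\<lambda>_. borel)) (\<lambda>\<omega>. restrict (\<lambda>i. X i \<omega>) B)"
    by (rule indep_var_restrict[OF indX]) (auto simp: A_def B_def)
  define F :: "(nat + nat \<times> nat \<Rightarrow> real) \<Rightarrow> real \<times> real" where
    "F f = ((\<Sum>i\<in>I. f (Inl i) - \<mu>), (\<Sum>i\<in>I. (f (Inl i) - \<mu>) ^ 2))" for f
  define G :: "(nat + nat \<times> nat \<Rightarrow> real) \<Rightarrow> real \<times> real" where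
    "G f = ((\<Sum>p\<in>J. f (Inr p)), 0)" for f
  have compA: "(\<lambda>f. f (Inl i)) \<in> borel_measurable (PiM A (\<lambda>_. borel))" if "i \<in> I" for i
    using that by (intro measurable_component_singleton) (auto simp: A_def)
  have compB: "(\<lambda>f. f (Inr p)) \<in> borel_measurable (PiM B (\<lambda>_. borel))" if "p \<in> J" for p
    using that by (intro measurable_component_singleton) (auto simp: B_def)
  have Fm: "F \<in> measurable (PiM A (\<lambda>_. borel)) borel"
    unfolding F_def borel_prod[symmetric]
    by (intro measurable_Pair borel_measurable_sum borel_measurable_diff borel_measurable_power
        compA borel_measurable_const)
  have Gm: "G \<in> measurable (PiM B (\<lambda>_. borel)) borel"
    unfolding G_def borel_prod[symmetric]
    by (intro measurable_Pair borel_measurable_sum compB borel_measurable_const)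
  have ind0: "indep_var borel (\<lambda>\<omega>. (SU \<omega>, SU2 \<omega>)) borel (\<lambda>\<omega>. (T \<omega>, 0))"
  proof -
    have "indep_var borel (F \<circ> (\<lambda>\<omega>. restrict (\<lambda>i. X i \<omega>) A)) borel (G \<circ> (\<lambda>\<omega>. restrict (\<lambda>i. X i \<omega>) B))"
      by (rule indep_var_compose[OF indAB Fm Gm])
    moreover have "F \<circ> (\<lambda>\<omega>. restrict (\<lambda>i. X i \<omega>) A) = (\<lambda>\<omega>. (SU \<omega>, SU2 \<omega>))"
      by (auto simp: fun_eq_iff F_def SU_def SU2_def U_def A_def X_def intro!: sum.cong)
    moreover have "G \<circ> (\<lambda>\<omega>. restrict (\<lambda>i. X i \<omega>) B) = (\<lambda>\<omega>. (T \<omega>, 0))"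
      by (auto simp: fun_eq_iff G_def T_def B_def X_def intro!: sum.cong)
    ultimately show ?thesis by simp
  qed
  have indc: "indep_var borel (\<lambda>\<omega>. \<phi> (SU \<omega>, SU2 \<omega>)) borel (\<lambda>\<omega>. \<psi> (T \<omega>))"
    if "\<phi> \<in> borel_measurable borel" "\<psi> \<in> borel_measurable borel" for \<phi> :: "real \<times> real \<Rightarrow> real" and \<psi> :: "real \<Rightarrow> real"
  proof -
    have "(\<lambda>(t::real, u::real). \<psi> t) \<in> borel_measurable borel"
      unfolding borel_prod[symmetric] using that(2) by measurable
    from indep_var_compose[OF ind0 that(1) this] show ?thesis by (simp add: comp_def)
  qed
  have sfn: "s \<omega> = sqrt ((SU2 \<omega> - SU \<omega> ^ 2 / real n_obs) / k)" for \<omega>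
    by (simp add: s_fun css_fun)
  have ind_b: "indep_var borel (\<lambda>\<omega>. (yb \<omega> - \<mu>) * s \<omega>) borel T"
  proof -
    have "indep_var borel (\<lambda>\<omega>. (\<lambda>(x,y). x / real n_obs * sqrt ((y - x ^ 2 / real n_obs) / k)) (SU \<omega>, SU2 \<omega>)) borel (\<lambda>\<omega>. id (T \<omega>))"
      by (rule indc; (subst borel_prod[symmetric])?; measurable)
    then show ?thesis by (simp add: yb_eq sfn)
  qed
  have ind_s: "indep_var borel s borel T"
  proof -
    have "indep_var borel (\<lambda>\<omega>. (\<lambda>(x,y). sqrt ((y - x ^ 2 / real n_obs) / k)) (SU \<omega>, SU2 \<omega>)) borel (\<lambda>\<omega>. id (T \<omega>))"
      by (rule indc; (subst borel_prod[symmetric])?; measurable)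
    then show ?thesis by (simp add: s_fun css_fun)
  qed
  have ind_s2: "indep_var borel (\<lambda>\<omega>. s \<omega> ^ 2) borel (\<lambda>\<omega>. T \<omega> ^ 2)"
  proof -
    have "indep_var borel (\<lambda>\<omega>. (\<lambda>(x,y). sqrt ((y - x ^ 2 / real n_obs) / k) ^ 2) (SU \<omega>, SU2 \<omega>)) borel (\<lambda>\<omega>. (\<lambda>t. t ^ 2) (T \<omega>))"
      by (rule indc; (subst borel_prod[symmetric])?; measurable)
    then show ?thesis by (simp add: sfn)
  qed
  define c where "c = n * real D"
  have cpos: "c > 0" using npos Dpos c_def by simp
  have V_fun: "mu_MI_M n_obs n_mis D c_M Y Z = (\<lambda>\<omega>. yb \<omega> + s \<omega> * T \<omega> / c)"
    using mu_eq by (simp add: fun_eq_iff c_def)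
  have sT_int: "integrable M (\<lambda>\<omega>. s \<omega> * T \<omega>)"
    by (rule indep_var_integrable[OF ind_s s_int T_int])
  have sT_E: "expectation (\<lambda>\<omega>. s \<omega> * T \<omega>) = 0"
    using indep_var_lebesgue_integral[OF ind_s s_int T_int] T_E by simp
  have yb_fun: "yb = (\<lambda>\<omega>. SU \<omega> / real n_obs + \<mu>)" using yb_eq by (simp add: fun_eq_iff algebra_simps)
  have yb_int: "integrable M yb" unfolding yb_fun using SU_int by simp
  have yb_E: "expectation yb = \<mu>" unfolding yb_fun using SU_int SU_E by (simp add: prob_space)
  have V_E: "expectation (\<lambda>\<omega>. yb \<omega> + s \<omega> * T \<omega> / c) = \<mu>"
    using yb_int sT_int yb_E sT_E by simp
  have bT_int: "integrable M (\<lambda>\<omega>. (yb \<omega> - \<mu>) * s \<omega> * T \<omega>)"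
    using indep_var_integrable[OF ind_b b_int T_int] by simp
  have bT_E: "expectation (\<lambda>\<omega>. (yb \<omega> - \<mu>) * s \<omega> * T \<omega>) = 0"
    using indep_var_lebesgue_integral[OF ind_b b_int T_int] T_E by simp
  have s2T2_int: "integrable M (\<lambda>\<omega>. s \<omega> ^ 2 * T \<omega> ^ 2)"
    by (rule indep_var_integrable[OF ind_s2 s_sq T_sq])
  have s2T2_E: "expectation (\<lambda>\<omega>. s \<omega> ^ 2 * T \<omega> ^ 2) = (real n_obs - 1) * \<sigma>^2 / k * real (n_mis * D)"
    using indep_var_lebesgue_integral[OF ind_s2 s_sq T_sq] s2_E T_sqE by simp
  have expand: "(\<lambda>\<omega>. (yb \<omega> + s \<omega> * T \<omega> / c - \<mu>)^2) =
      (\<lambda>\<omega>. (yb \<omega> - \<mu>)^2 + (2 / c) * ((yb \<omega> - \<mu>) * s \<omega> * T \<omega>) + (1 / c^2) * (s \<omega> ^ 2 * T \<omega> ^ 2))"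
    using cpos by (simp add: fun_eq_iff power2_eq_square field_simps)
  have "variance (mu_MI_M n_obs n_mis D c_M Y Z) =
      expectation (\<lambda>\<omega>. (yb \<omega> - \<mu>)^2 + (2 / c) * ((yb \<omega> - \<mu>) * s \<omega> * T \<omega>) + (1 / c^2) * (s \<omega> ^ 2 * T \<omega> ^ 2))"
    unfolding V_fun V_E expand ..
  also have "\<dots> = \<sigma>^2 / real n_obs + (1 / c^2) * ((real n_obs - 1) * \<sigma>^2 / k * real (n_mis * D))"
    using a_sq bT_int s2T2_int a_sqE bT_E s2T2_E by simp
  also have "\<dots> = \<sigma>^2 * (1 / real n_obs + real n_mis * (real n_obs - 1) /
       (real D * (real (n_obs + n_mis))^2 * (c_M + real n_obs - 1)))"
  proof -
    have kk: "c_M + real n_obs - 1 = k" by (simp add: k_def)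
    have "(1 / c^2) * ((real n_obs - 1) * \<sigma>^2 / k * real (n_mis * D))
        = \<sigma>^2 * (real n_mis * (real n_obs - 1) / (real D * n^2 * k))"
      using Dpos npos k unfolding c_def by (simp add: field_simps power2_eq_square)
    then show ?thesis unfolding kk n_def[symmetric] by (simp add: distrib_left)
  qed
  finally show ?thesis .
qed

end
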